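(* Consider $n$ robots initially placed at distinct nodes of the infinite grid $\mathbb{Z}\times\mathbb{Z}$ together with a finite set $M$ of meeting nodes, in the model described in the context. Suppose the initial configuration $C(0)$ belongs to $\mathcal{I}_3^{b3}\cup\mathcal{I}_4^{b3}$. Then the gathering over Weber nodes problem cannot be solved from $C(0)$: there is no deterministic distributed algorithm guaranteeing that, from $C(0)$, all robots eventually gather (and remain) at a single node that is a Weber node of $C(0)$.
   Context: Model: robots are anonymous, homogeneous (all run the same deterministic algorithm), oblivious, silent, with no agreement on a global coordinate system or on chirality, and with unlimited visibility. They operate in Look-Compute-Move cycles under a fair asynchronous scheduler; in a cycle a robot either stays or moves to an adjacent grid node, moves being instantaneous. Robots have global strong multiplicity detection (they see the exact number of robots on every node) and see the meeting nodes. Let $d$ be the grid (shortest path) distance, $\lambda_t(v)$ the number of robots at node $v$ at time $t$, $c_t(m)=\sum_v d(v,m)\lambda_t(v)$, and $W(t)$ the set of meeting nodes $m\in M$ minimizing $c_t(m)$ (the Weber nodes). A symmetry of $M$ is a grid automorphism (reflection or rotation) mapping $M$ to itself; a symmetry of the configuration $C(t)$ is a grid automorphism $\phi$ preserving meeting nodes and satisfying $\lambda_t(\phi(v))=\lambda_t(v)$ for all $v$. Class $\mathcal{I}_3^{b3}$: $M$ admits a unique line of (reflection) symmetry $l$, $|W(t)|\ge 2$, $C(t)$ is symmetric with respect to $l$, and there is no Weber node and no robot on $l$ (there may be meeting nodes on $l$). Class $\mathcal{I}_4^{b3}$: $M$ admits rotational symmetry with center $c$, $|W(t)|\ge 2$,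 $C(t)$ is symmetric with respect to that rotational symmetry, and there is neither a meeting node nor a robot on $c$. *)

theory Defs
  imports Main
begin

type_synonym node = "int \<times> int"

definition addv :: "node \<Rightarrow> node \<Rightarrow> node" where
  "addv u v = (fst u + fst v, snd u + snd v)"

definition subv :: "node \<Rightarrow> node \<Rightarrow> node" where
  "subv u v = (fst u - fst v, snd u - snd v)"

definition gdist :: "node \<Rightarrow> node \<Rightarrow> nat" where
  "gdist u v = nat (\<bar>fst u - fst v\<bar> + \<bar>snd u - snd v\<bar>)"

text \<open>The 8 linear automorphisms of the grid fixing the origin
  (possible orientations of a local coordinate system; no chirality).\<close>
definition ortho_maps :: "(node \<Rightarrow> node) set" where
  "ortho_maps = {f. \<exists>(s1::int) (s2::int) (sw::bool). s1 \<in> {1, -1} \<and> s2 \<in> {1, -1} \<and>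
      f = (\<lambda>(x, y). if sw then (s1 * y, s2 * x) else (s1 * x, s2 * y))}"

definition grid_aut :: "(node \<Rightarrow> node) \<Rightarrow> bool" where
  "grid_aut \<phi> \<longleftrightarrow> (\<exists>g \<in> ortho_maps. \<exists>b. \<phi> = (\<lambda>v. addv (g v) b))"

definition orient :: "(node \<Rightarrow> node) \<Rightarrow> int" where
  "orient \<phi> = (let e1 = subv (\<phi> (1, 0)) (\<phi> (0, 0)); e2 = subv (\<phi> (0, 1)) (\<phi> (0, 0))
               in fst e1 * snd e2 - fst e2 * snd e1)"

text \<open>Reflection in a line: orientation-reversing involutive grid automorphism.
  Its line of symmetry is its fixed point set; a node lies on the line iff it is fixed.\<close>
definition reflection :: "(node \<Rightarrow> node) \<Rightarrow> bool" where
  "reflection \<phi> \<longleftrightarrow> grid_aut \<phi> \<and> orient \<phi> = -1 \<and> (\<forall>v. \<phi> (\<phi> v) = v)"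

text \<open>Non-trivial rotation: orientation-preserving grid automorphism that is not a
  translation.  Its center is its unique fixed point in the plane; a node lies on the
  center iff it is fixed.\<close>
definition rotation :: "(node \<Rightarrow> node) \<Rightarrow> bool" where
  "rotation \<phi> \<longleftrightarrow> grid_aut \<phi> \<and> orient \<phi> = 1 \<and>
     (\<exists>v. subv (\<phi> v) (\<phi> (0, 0)) \<noteq> v)"

text \<open>Robots are indexed by i < n; pos i is the node of robot i.\<close>
definition lam :: "nat \<Rightarrow> (nat \<Rightarrow> node) \<Rightarrow> node \<Rightarrow> nat" where
  "lam n pos v = card {i. i < n \<and> pos i = v}"

definition cost :: "nat \<Rightarrow> (nat \<Rightarrow> node) \<Rightarrow> node \<Rightarrow> nat" where
  "cost n pos m = (\<Sum>v \<in> pos ` {..<n}. gdist v m * lam n pos v)"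

definition weber :: "node set \<Rightarrow> nat \<Rightarrow> (nat \<Rightarrow> node) \<Rightarrow> node set" where
  "weber M n pos = {m \<in> M. \<forall>m' \<in> M. cost n pos m \<le> cost n pos m'}"

definition config_sym :: "node set \<Rightarrow> nat \<Rightarrow> (nat \<Rightarrow> node) \<Rightarrow> (node \<Rightarrow> node) \<Rightarrow> bool" where
  "config_sym M n pos \<phi> \<longleftrightarrow> grid_aut \<phi> \<and> \<phi> ` M = M \<and> (\<forall>v. lam n pos (\<phi> v) = lam n pos v)"

definition classI3b3 :: "node set \<Rightarrow> nat \<Rightarrow> (nat \<Rightarrow> node) \<Rightarrow> bool" where
  "classI3b3 M n pos \<longleftrightarrow> (\<exists>\<phi>. reflection \<phi> \<and> \<phi> ` M = M \<and>
      (\<forall>\<psi>. reflection \<psi> \<and> \<psi> ` M = M \<longrightarrow> \<psi> = \<phi>) \<and>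
      2 \<le> card (weber M n pos) \<and>
      config_sym M n pos \<phi> \<and>
      (\<forall>v. \<phi> v = v \<longrightarrow> v \<notin> weber M n pos \<and> lam n pos v = 0))"

definition classI4b3 :: "node set \<Rightarrow> nat \<Rightarrow> (nat \<Rightarrow> node) \<Rightarrow> bool" where
  "classI4b3 M n pos \<longleftrightarrow> (\<exists>\<phi>. rotation \<phi> \<and> \<phi> ` M = M \<and>
      2 \<le> card (weber M n pos) \<and>
      config_sym M n pos \<phi> \<and>
      (\<forall>v. \<phi> v = v \<longrightarrow> v \<notin> M \<and> lam n pos v = 0))"

datatype move = Stay | North | East | South | West

fun mvec :: "move \<Rightarrow> node" where
  "mvec Stay = (0, 0)"
| "mvec North = (0, 1)"
| "mvec East = (1, 0)"
| "mvec South = (0, -1)"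
| "mvec West = (-1, 0)"

text \<open>A snapshot in the robot's local coordinates (robot at the origin): multiplicity of
  every node and the set of meeting nodes.\<close>
type_synonym view = "(node \<Rightarrow> nat) \<times> node set"

text \<open>A deterministic, oblivious algorithm, common to all (anonymous) robots.\<close>
type_synonym algorithm = "view \<Rightarrow> move"

text \<open>F : local-to-global orientation of the robot's (arbitrary) coordinate system.\<close>
definition view_of :: "node set \<Rightarrow> nat \<Rightarrow> (nat \<Rightarrow> node) \<Rightarrow> node \<Rightarrow> (node \<Rightarrow> node) \<Rightarrow> view" where
  "view_of M n pos x F = ((\<lambda>u. lam n pos (addv x (F u))), {u. addv x (F u) \<in> M})"

text \<open>Asynchronous Look-Compute-Move execution: P t i is the node of robot i at time t,
  Q t i the (global) move computed at the last Look and not yet executed.  At each step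
  every robot independently idles, performs Look+Compute (on the current snapshot),
  or performs its instantaneous Move.  F i is the fixed local frame of robot i.\<close>
definition async_execution ::
  "algorithm \<Rightarrow> node set \<Rightarrow> nat \<Rightarrow> (nat \<Rightarrow> node) \<Rightarrow> (nat \<Rightarrow> node \<Rightarrow> node)
    \<Rightarrow> (nat \<Rightarrow> nat \<Rightarrow> node) \<Rightarrow> (nat \<Rightarrow> nat \<Rightarrow> node option) \<Rightarrow> bool" where
  "async_execution A M n pos0 F P Q \<longleftrightarrow>
     (\<forall>i<n. F i \<in> ortho_maps) \<and>
     (\<forall>i<n. P 0 i = pos0 i \<and> Q 0 i = None) \<and>
     (\<forall>t. \<forall>i<n.
        (P (Suc t) i = P t i \<and> Q (Suc t) i = Q t i)
      \<or> (Q t i = None \<and> P (Suc t) i = P t i \<and>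
         Q (Suc t) i = Some (F i (mvec (A (view_of M n (P t) (P t i) (F i))))))
      \<or> (\<exists>d. Q t i = Some d \<and> P (Suc t) i = addv (P t i) d \<and> Q (Suc t) i = None))"

text \<open>Fairness: every robot completes infinitely many cycles.\<close>
definition fair :: "nat \<Rightarrow> (nat \<Rightarrow> nat \<Rightarrow> node option) \<Rightarrow> bool" where
  "fair n Q \<longleftrightarrow> (\<forall>i<n. \<forall>t. \<exists>t'\<ge>t. Q t' i \<noteq> None \<and> Q (Suc t') i = None)"

definition gathers_at_weber :: "node set \<Rightarrow> nat \<Rightarrow> (nat \<Rightarrow> node) \<Rightarrow> (nat \<Rightarrow> nat \<Rightarrow> node) \<Rightarrow> bool" where
  "gathers_at_weber M n pos0 P \<longleftrightarrow>
     (\<exists>T. \<exists>v \<in> weber M n pos0. \<forall>t\<ge>T. \<forall>i<n. P t i = v)"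

definition solves :: "algorithm \<Rightarrow> node set \<Rightarrow> nat \<Rightarrow> (nat \<Rightarrow> node) \<Rightarrow> bool" where
  "solves A M n pos0 \<longleftrightarrow>
     (\<forall>F P Q. async_execution A M n pos0 F P Q \<and> fair n Q \<longrightarrow> gathers_at_weber M n pos0 P)"

end

theory Submission
  imports Defs
begin

lemma ortho_add:
  assumes "g \<in> ortho_maps"
  shows "g (addv u w) = addv (g u) (g w)"
  using assms unfolding ortho_maps_def addv_def
  by (cases u; cases w; auto simp: algebra_simps)

lemma ortho_zero:
  assumes "g \<in> ortho_maps"
  shows "g (0, 0) = (0, 0)"
  using assms unfolding ortho_maps_def by auto

lemma id_ortho: "id \<in> ortho_maps"
proof -
  have "id = (\<lambda>(x::int, y::int). if False then (1 * y, 1 * x) else (1 * x, 1 * y))"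
    by auto
  then show ?thesis unfolding ortho_maps_def by blast
qed

lemma neg_ortho: "(\<lambda>(x::int, y::int). (- x, - y)) \<in> ortho_maps"
proof -
  have "(\<lambda>(x::int, y::int). (- x, - y)) = (\<lambda>(x::int, y::int). if False then ((-1) * y, (-1) * x) else ((-1) * x, (-1) * y))"
    by auto
  then show ?thesis unfolding ortho_maps_def by blast
qed

lemma core:
  fixes g :: "node \<Rightarrow> node" and b :: node and M n pos0 and A :: algorithm
  assumes inj: "inj_on pos0 {..<n}" and n1: "n \<ge> 1" and go: "g \<in> ortho_maps"
    and invol: "\<forall>v. addv (g (addv (g v) b)) b = v"
    and symM: "(\<lambda>v. addv (g v) b) ` M = M"
    and symL: "\<forall>v. lam n pos0 (addv (g v) b) = lam n pos0 v"
    and fixp: "\<forall>v. addv (g v) b = v \<longrightarrow> v \<notin> weber M n pos0 \<and> lam n pos0 v = 0"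
  shows "\<not> solves A M n pos0"
proof
  assume sol: "solves A M n pos0"
  define \<psi> where "\<psi> = (\<lambda>v. addv (g v) b)"
  have pp: "\<psi> (\<psi> v) = v" for v unfolding \<psi>_def using invol[rule_format, of v] by simp
  have symL': "lam n pos0 (\<psi> v) = lam n pos0 v" for v unfolding \<psi>_def using symL[rule_format, of v] .
  have fixp': "\<psi> v = v \<Longrightarrow> v \<notin> weber M n pos0 \<and> lam n pos0 v = 0" for v unfolding \<psi>_def using fixp[rule_format, of v] by blast
  have g0: "g (0,0) = (0,0)" using ortho_zero[OF go] .
  have gb: "addv (g b) b = (0,0)"
    using invol[rule_format, of "(0,0)"] g0 ortho_add[OF go] by (simp add: addv_def)
  have gg: "g (g u) = u" for u
  proof -
    have "addv (g (addv (g u) b)) b = u" using invol[rule_format, of u] by simp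
    then have "addv (addv (g (g u)) (g b)) b = u" using ortho_add[OF go] by simp
    then show ?thesis using gb by (simp add: addv_def algebra_simps prod_eq_iff)
  qed
  have \<psi>_add: "\<psi> (addv x y) = addv (\<psi> x) (g y)" for x y
    unfolding \<psi>_def using ortho_add[OF go] by (simp add: addv_def algebra_simps)
  have \<psi>M: "\<psi> y \<in> M \<longleftrightarrow> y \<in> M" for y
  proof
    assume "\<psi> y \<in> M"
    then have "\<psi> (\<psi> y) \<in> \<psi> ` M" by blast
    then show "y \<in> M" using pp symM \<psi>_def by simp
  next
    assume "y \<in> M"
    then have "\<psi> y \<in> \<psi> ` M" by blast
    then show "\<psi> y \<in> M" using symM \<psi>_def by simp
  qed
  define lt :: "node \<Rightarrow> node \<Rightarrow> bool" where
    "lt v w = (fst v < fst w \<or> fst v = fst w \<and> snd v < snd w)" for v w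
  define G where "G v = (if lt v (\<psi> v) then id else g)" for v
  have G_eq: "G (\<psi> v) = g \<circ> G v" if "\<psi> v \<noteq> v" for v
  proof (cases "lt v (\<psi> v)")
    case True
    then have "\<not> lt (\<psi> v) (\<psi> (\<psi> v))" using pp lt_def by auto
    then show ?thesis using True G_def by auto
  next
    case False
    then have "lt (\<psi> v) (\<psi> (\<psi> v))" using pp lt_def that by (auto simp: prod_eq_iff)
    then show ?thesis using False G_def gg by (auto simp: fun_eq_iff)
  qed
  have lampos: "lam n pos0 (pos0 i) > 0" if "i < n" for i
  proof -
    have "i \<in> {j. j < n \<and> pos0 j = pos0 i}" using that by simp
    moreover have "finite {j. j < n \<and> pos0 j = pos0 i}" by simp
    ultimately show ?thesis unfolding lam_def by (metis card_gt_0_iff empty_iff)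
  qed
  define \<sigma> where "\<sigma> i = (THE j. j < n \<and> pos0 j = \<psi> (pos0 i))" for i
  have \<sigma>p: "\<sigma> i < n \<and> pos0 (\<sigma> i) = \<psi> (pos0 i)" if "i < n" for i
  proof -
    have "lam n pos0 (\<psi> (pos0 i)) > 0" using lampos[OF that] symL' by simp
    then have "{j. j < n \<and> pos0 j = \<psi> (pos0 i)} \<noteq> {}" unfolding lam_def by (metis card.empty less_irrefl)
    then obtain j where j: "j < n \<and> pos0 j = \<psi> (pos0 i)" by blast
    have "\<exists>!j. j < n \<and> pos0 j = \<psi> (pos0 i)"
      using j inj by (metis inj_onD lessThan_iff)
    then show ?thesis unfolding \<sigma>_def by (rule theI')
  qed
  have \<sigma>\<sigma>: "\<sigma> (\<sigma> i) = i" if "i < n" for i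
    using \<sigma>p[OF that] \<sigma>p[of "\<sigma> i"] pp inj that by (metis inj_onD lessThan_iff)
  define F where "F i = G (pos0 i)" for i
  have F\<sigma>: "F (\<sigma> i) = g \<circ> F i" if "i < n" for i
  proof -
    have "\<psi> (pos0 i) \<noteq> pos0 i"
    proof
      assume "\<psi> (pos0 i) = pos0 i"
      then have "lam n pos0 (pos0 i) = 0" using fixp' by blast
      then show False using lampos[OF that] by simp
    qed
    then show ?thesis using G_eq \<sigma>p[OF that] F_def by simp
  qed
  have Fo: "F i \<in> ortho_maps" for i using F_def G_def id_ortho go by auto
  define nxt where "nxt p i = addv (p i) (F i (mvec (A (view_of M n p (p i) (F i)))))" for p i
  define Inv where "Inv p = (\<forall>i<n. p (\<sigma> i) = \<psi> (p i))" for p :: "nat \<Rightarrow> node"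
  have lam_inv: "lam n p (\<psi> v) = lam n p v" if "Inv p" for p v
  proof -
    have "{i. i < n \<and> p i = \<psi> v} = \<sigma> ` {i. i < n \<and> p i = v}"
    proof
      show "\<sigma> ` {i. i < n \<and> p i = v} \<subseteq> {i. i < n \<and> p i = \<psi> v}"
        using \<sigma>p that Inv_def by auto
      show "{i. i < n \<and> p i = \<psi> v} \<subseteq> \<sigma> ` {i. i < n \<and> p i = v}"
      proof
        fix j assume "j \<in> {i. i < n \<and> p i = \<psi> v}"
        then have j: "j < n" "p j = \<psi> v" by auto
        then have "\<sigma> j < n" "p (\<sigma> j) = v" using \<sigma>p that Inv_def pp by auto
        then show "j \<in> \<sigma> ` {i. i < n \<and> p i = v}" using \<sigma>\<sigma>[OF j(1)] by (metis (mono_tags) image_eqI mem_Collect_eq)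
      qed
    qed
    moreover have "inj_on \<sigma> {i. i < n \<and> p i = v}"
    proof (rule inj_onI)
      fix x y assume xy: "x \<in> {i. i < n \<and> p i = v}" "y \<in> {i. i < n \<and> p i = v}" "\<sigma> x = \<sigma> y"
      then have "\<sigma> (\<sigma> x) = \<sigma> (\<sigma> y)" by simp
      then show "x = y" using \<sigma>\<sigma>[of x] \<sigma>\<sigma>[of y] xy(1,2) by simp
    qed
    ultimately show ?thesis unfolding lam_def by (simp add: card_image)
  qed
  have view_eq: "view_of M n p (\<psi> x) (g \<circ> Fr) = view_of M n p x Fr" if "Inv p" for p x Fr
  proof -
    have "addv (\<psi> x) (g (Fr u)) = \<psi> (addv x (Fr u))" for u using \<psi>_add by simp
    then show ?thesis unfolding view_of_def using lam_inv[OF that] \<psi>M by simp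
  qed
  have nxt_inv: "Inv (nxt p)" if "Inv p" for p
    unfolding Inv_def
  proof (intro allI impI)
    fix i assume i: "i < n"
    have "nxt p (\<sigma> i) = addv (\<psi> (p i)) (g (F i (mvec (A (view_of M n p (\<psi> (p i)) (g \<circ> F i))))))"
      unfolding nxt_def using F\<sigma>[OF i] that i Inv_def by simp
    also have "\<dots> = addv (\<psi> (p i)) (g (F i (mvec (A (view_of M n p (p i) (F i))))))"
      using view_eq[OF that] by simp
    also have "\<dots> = \<psi> (nxt p i)" unfolding nxt_def using \<psi>_add by simp
    finally show "nxt p (\<sigma> i) = \<psi> (nxt p i)" .
  qed
  have inv0: "Inv pos0" using \<sigma>p Inv_def by simp
  have invk: "Inv ((nxt ^^ k) pos0)" for k
    by (induction k) (auto simp: inv0 nxt_inv)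
  define P where "P t = (nxt ^^ (t div 2)) pos0" for t
  define Q where "Q t i = (if even t then None else Some (F i (mvec (A (view_of M n (P t) (P t i) (F i))))))" for t i
  have ex: "async_execution A M n pos0 F P Q"
    unfolding async_execution_def
  proof (intro conjI allI impI)
    fix i assume "i < n" show "F i \<in> ortho_maps" by (rule Fo)
  next
    fix i assume "i < n" show "P 0 i = pos0 i" by (simp add: P_def)
  next
    fix i assume "i < n" show "Q 0 i = None" by (simp add: Q_def)
  next
    fix t i assume "i < n"
    show "P (Suc t) i = P t i \<and> Q (Suc t) i = Q t i \<or>
       Q t i = None \<and> P (Suc t) i = P t i \<and> Q (Suc t) i = Some (F i (mvec (A (view_of M n (P t) (P t i) (F i))))) \<or>
       (\<exists>d. Q t i = Some d \<and> P (Suc t) i = addv (P t i) d \<and> Q (Suc t) i = None)"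
    proof (cases "even t")
      case True
      then have "Suc t div 2 = t div 2" by presburger
      then have "P (Suc t) = P t" by (simp add: P_def)
      then show ?thesis using True by (simp add: Q_def)
    next
      case False
      then have "Suc t div 2 = Suc (t div 2)" by presburger
      then have "P (Suc t) = nxt (P t)" by (simp add: P_def)
      then show ?thesis using False by (simp add: Q_def nxt_def)
    qed
  qed
  have fr: "fair n Q"
    unfolding fair_def
  proof (intro allI impI)
    fix i t assume "i < n"
    show "\<exists>t'\<ge>t. Q t' i \<noteq> None \<and> Q (Suc t') i = None"
      by (rule exI[of _ "2 * t + 1"]) (simp add: Q_def)
  qed
  have "gathers_at_weber M n pos0 P" using sol ex fr unfolding solves_def by blast
  then obtain T v where v: "v \<in> weber M n pos0" and all: "\<forall>t\<ge>T. \<forall>i<n. P t i = v"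
    unfolding gathers_at_weber_def by blast
  have n0: "0 < n" using n1 by simp
  have "Inv (P T)" using invk P_def by simp
  then have "P T (\<sigma> 0) = \<psi> (P T 0)" using Inv_def n0 by simp
  moreover have "P T (\<sigma> 0) = v" "P T 0 = v" using all \<sigma>p[OF n0] n0 by auto
  ultimately have "\<psi> v = v" by simp
  then show False using fixp' v by blast
qed

lemma weber_sub: "weber M n pos \<subseteq> M" unfolding weber_def by auto

theorem lemma2:
  fixes M :: "node set" and n :: nat and pos0 :: "nat \<Rightarrow> node"
  assumes "finite M"
    and "n \<ge> 1"
    and "inj_on pos0 {..<n}"
    and "classI3b3 M n pos0 \<or> classI4b3 M n pos0"
  shows "\<not> (\<exists>A :: algorithm. solves A M n pos0)"
proof
  assume "\<exists>A :: algorithm. solves A M n pos0"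
  then obtain A :: algorithm where sol: "solves A M n pos0" by blast
  show False
  proof (cases "classI3b3 M n pos0")
    case True
    then obtain \<phi> where r: "reflection \<phi>" and sM: "\<phi> ` M = M" and cs: "config_sym M n pos0 \<phi>"
      and fx: "\<forall>v. \<phi> v = v \<longrightarrow> v \<notin> weber M n pos0 \<and> lam n pos0 v = 0"
      unfolding classI3b3_def by blast
    from r obtain g b where go: "g \<in> ortho_maps" and phi: "\<phi> = (\<lambda>v. addv (g v) b)"
      and inv: "\<forall>v. \<phi> (\<phi> v) = v"
      unfolding reflection_def grid_aut_def by blast
    have "\<not> solves A M n pos0"
    proof (rule core[OF assms(3) assms(2) go])
      show "\<forall>v. addv (g (addv (g v) b)) b = v" using inv phi by simp
      show "(\<lambda>v. addv (g v) b) ` M = M" using sM phi by simp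
      have "lam n pos0 (\<phi> v) = lam n pos0 v" for v using cs unfolding config_sym_def by blast
      then show "\<forall>v. lam n pos0 (addv (g v) b) = lam n pos0 v" using phi by simp
      show "\<forall>v. addv (g v) b = v \<longrightarrow> v \<notin> weber M n pos0 \<and> lam n pos0 v = 0" using fx phi by simp
    qed
    then show False using sol by simp
  next
    case False
    then have "classI4b3 M n pos0" using assms(4) by simp
    then obtain \<phi> where r: "rotation \<phi>" and sM: "\<phi> ` M = M" and cs: "config_sym M n pos0 \<phi>"
      and fx: "\<forall>v. \<phi> v = v \<longrightarrow> v \<notin> M \<and> lam n pos0 v = 0"
      unfolding classI4b3_def by blast
    from r obtain g b where go: "g \<in> ortho_maps" and phi: "\<phi> = (\<lambda>v. addv (g v) b)"
      and ori: "orient \<phi> = 1" and nt: "\<exists>v. subv (\<phi> v) (\<phi> (0, 0)) \<noteq> v"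
      unfolding rotation_def grid_aut_def by blast
    from go obtain s1 s2 :: int and sw where s: "s1 \<in> {1, -1}" "s2 \<in> {1, -1}"
      and gdef: "g = (\<lambda>(x, y). if sw then (s1 * y, s2 * x) else (s1 * x, s2 * y))"
      unfolding ortho_maps_def by blast
    obtain b1 b2 where bdef: "b = (b1, b2)" by (cases b)
    have symL: "lam n pos0 (\<phi> v) = lam n pos0 v" for v using cs unfolding config_sym_def by blast
    have fxw: "\<phi> v = v \<Longrightarrow> v \<notin> weber M n pos0 \<and> lam n pos0 v = 0" for v
      using fx weber_sub by blast
    have phiv: "\<phi> (x, y) = (if sw then (s1 * y + b1, s2 * x + b2) else (s1 * x + b1, s2 * y + b2))" for x y
      using phi gdef bdef by (simp add: addv_def)
    show False
    proof (cases sw)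
      case False
      have "s1 * s2 = 1" using ori phiv False by (simp add: orient_def subv_def)
      moreover have "\<not> (s1 = 1 \<and> s2 = 1)"
      proof
        assume "s1 = 1 \<and> s2 = 1"
        then have "subv (\<phi> v) (\<phi> (0, 0)) = v" for v using phiv False by (cases v) (simp add: subv_def)
        then show False using nt by blast
      qed
      ultimately have s12: "s1 = -1" "s2 = -1" using s by auto
      have "\<not> solves A M n pos0"
      proof (rule core[OF assms(3) assms(2) go])
        have "\<phi> (\<phi> v) = v" for v using phiv False s12 by (cases v) simp
        then show "\<forall>v. addv (g (addv (g v) b)) b = v" using phi by simp
        show "(\<lambda>v. addv (g v) b) ` M = M" using sM phi by simp
        show "\<forall>v. lam n pos0 (addv (g v) b) = lam n pos0 v" using symL phi by simp
        show "\<forall>v. addv (g v) b = v \<longrightarrow> v \<notin> weber M n pos0 \<and> lam n pos0 v = 0" using fxw phi by simp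
      qed
      then show False using sol by simp
    next
      case True
      have "- (s1 * s2) = 1" using ori phiv True by (simp add: orient_def subv_def)
      then have s21: "s2 = - s1" "s1 * s1 = 1" using s by auto
      define g' :: "node \<Rightarrow> node" where "g' = (\<lambda>(x, y). (- x, - y))"
      define b' where "b' = (s1 * b2 + b1, s2 * b1 + b2)"
      have psi: "addv (g' v) b' = \<phi> (\<phi> v)" for v
        using phiv True s21 unfolding g'_def b'_def
        by (cases v) (simp add: addv_def algebra_simps)
      have "\<not> solves A M n pos0"
      proof (rule core[OF assms(3) assms(2)])
        show "g' \<in> ortho_maps" unfolding g'_def by (rule neg_ortho)
        show "\<forall>v. addv (g' (addv (g' v) b')) b' = v" unfolding g'_def
          by (simp add: addv_def split: prod.splits)
        have "(\<lambda>v. addv (g' v) b') ` M = \<phi> ` \<phi> ` M" using psi by (auto simp: image_iff)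
        then show "(\<lambda>v. addv (g' v) b') ` M = M" using sM by simp
        show "\<forall>v. lam n pos0 (addv (g' v) b') = lam n pos0 v" using symL psi by simp
        show "\<forall>v. addv (g' v) b' = v \<longrightarrow> v \<notin> weber M n pos0 \<and> lam n pos0 v = 0"
        proof (intro allI impI)
          fix v assume "addv (g' v) b' = v"
          then have h: "\<phi> (\<phi> v) = v" using psi by simp
          obtain x y where v: "v = (x, y)" by (cases v)
          have "\<phi> v = v"
          proof -
            have e: "s1 * (s2 * x + b2) + b1 = x" "s2 * (s1 * y + b1) + b2 = y"
              using h phiv True v by simp_all
            have "s1 * y + b1 = x" "s2 * x + b2 = y"
              using e s21 s by (auto simp: algebra_simps)
            then show ?thesis using phiv True v by simp
          qed
          then show "v \<notin> weber M n pos0 \<and> lam n pos0 v = 0" using fxw by blast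
        qed
      qed
      then show False using sol by simp
    qed
  qed
qed

end
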